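(* Let $\pi_n$ be a posterior density on $\Theta$, let $f^*_{\hat\theta}$ be a probability density symmetric about $\hat\theta\in\Theta$, and let $q^*_{\hat\theta}(\theta)=2f^*_{\hat\theta}(\theta)w^*_{\hat\theta}(\theta)$. Then for every $\hat\theta\in\Theta$ and sample size $n$, $$\mathcal{D}[\pi_n\,\|\,q^*_{\hat\theta}]=\mathcal{D}[\bar\pi_{n,\hat\theta}\,\|\,f^*_{\hat\theta}],$$ and consequently $$\mathcal{D}[\pi_n\,\|\,q^*_{\hat\theta}]\le\mathcal{D}[\pi_n\,\|\,f^*_{\hat\theta}],$$ where $\mathcal{D}$ is either $\mathcal{D}_{TV}$ or any $\alpha$-divergence $\mathcal{D}_\alpha$, $\alpha\in\mathbb{R}\setminus\{0,1\}$ (and the same holds for the limiting Kullback–Leibler cases $\alpha\to0,1$).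
   Context: Posterior $\pi_n(\theta)=\pi(\theta)L(\theta;y_{1:n})/c(y_{1:n})$ on $\Theta\subseteq\mathbb{R}^d$, $\Theta$ symmetric about $\hat\theta$. Symmetric about $\hat\theta$ means $f(\theta)=f(2\hat\theta-\theta)$. Symmetrized posterior: $\bar\pi_{n,\hat\theta}(\theta)=\tfrac12[\pi_n(\theta)+\pi_n(2\hat\theta-\theta)]$. Skewness-inducing factor: $w^*_{\hat\theta}(\theta)=\frac{\pi(\theta)L(\theta;y_{1:n})}{\pi(\theta)L(\theta;y_{1:n})+\pi(2\hat\theta-\theta)L(2\hat\theta-\theta;y_{1:n})}$, set to $1/2$ when numerator and denominator both vanish. $\mathcal{D}_{TV}[p\|q]=\tfrac12\int|p-q|$; $\mathcal{D}_\alpha[p\|q]=\frac{1}{\alpha(1-\alpha)}(1-\int p^\alpha q^{1-\alpha})$; limits $\alpha\to1$: $\mathrm{KL}[p\|q]$, $\alpha\to0$: $\mathrm{KL}[q\|p]$. *)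

theory Defs
  imports "HOL-Analysis.Analysis"
begin

definition reflect :: "'a::real_vector \<Rightarrow> 'a \<Rightarrow> 'a" where
  "reflect th t = 2 *\<^sub>R th - t"

definition symmetric_set :: "'a::real_vector \<Rightarrow> 'a set \<Rightarrow> bool" where
  "symmetric_set th \<Theta> \<longleftrightarrow> (\<forall>t\<in>\<Theta>. reflect th t \<in> \<Theta>)"

definition sym_about :: "'a::real_vector set \<Rightarrow> 'a \<Rightarrow> ('a \<Rightarrow> real) \<Rightarrow> bool" where
  "sym_about \<Theta> th f \<longleftrightarrow> (\<forall>t\<in>\<Theta>. f t = f (reflect th t))"

definition posterior :: "'a measure \<Rightarrow> ('a \<Rightarrow> real) \<Rightarrow> ('a \<Rightarrow> real) \<Rightarrow> 'a \<Rightarrow> real" where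
  "posterior M prior L t = prior t * L t / (\<integral>s. prior s * L s \<partial>M)"

definition sym_posterior ::
  "'a measure \<Rightarrow> ('a \<Rightarrow> real) \<Rightarrow> ('a \<Rightarrow> real) \<Rightarrow> 'a::real_vector \<Rightarrow> 'a \<Rightarrow> real" where
  "sym_posterior M prior L th t =
     (posterior M prior L t + posterior M prior L (reflect th t)) / 2"

definition skew_factor :: "('a \<Rightarrow> real) \<Rightarrow> ('a \<Rightarrow> real) \<Rightarrow> 'a::real_vector \<Rightarrow> 'a \<Rightarrow> real" where
  "skew_factor prior L th t =
     (let a = prior t * L t; b = prior (reflect th t) * L (reflect th t)
      in if a = 0 \<and> a + b = 0 then 1/2 else a / (a + b))"

definition skew_density ::
  "('a \<Rightarrow> real) \<Rightarrow> ('a \<Rightarrow> real) \<Rightarrow> ('a \<Rightarrow> real) \<Rightarrow> 'a::real_vector \<Rightarrow> 'a \<Rightarrow> real" where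
  "skew_density prior L f th t = 2 * f t * skew_factor prior L th t"

definition TV_div :: "'a measure \<Rightarrow> ('a \<Rightarrow> real) \<Rightarrow> ('a \<Rightarrow> real) \<Rightarrow> ereal" where
  "TV_div M p q = ereal (1/2) * enn2ereal (\<integral>\<^sup>+ x. ennreal \<bar>p x - q x\<bar> \<partial>M)"

text \<open>Integrand p^a q^(1-a) for nonnegative p, q, with the usual conventions
  0^b = 0 for b > 0 and 0^b = infinity for b < 0 (a not in {0,1}).\<close>
definition alpha_integrand :: "real \<Rightarrow> real \<Rightarrow> real \<Rightarrow> ennreal" where
  "alpha_integrand a p q =
     (if p > 0 \<and> q > 0 then ennreal (p powr a * q powr (1 - a))
      else if p = 0 \<and> q = 0 then 0
      else if q = 0 then (if a < 1 then 0 else \<infinity>)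
      else (if a > 0 then 0 else \<infinity>))"

definition kl_integrand :: "real \<Rightarrow> real \<Rightarrow> ereal" where
  "kl_integrand p q = (if p = 0 then 0 else if q = 0 then \<infinity> else ereal (p * ln (p / q)))"

text \<open>KL[p||q] = int p log(p/q), as (positive part) - (negative part).\<close>
definition KL_div :: "'a measure \<Rightarrow> ('a \<Rightarrow> real) \<Rightarrow> ('a \<Rightarrow> real) \<Rightarrow> ereal" where
  "KL_div M p q =
     enn2ereal (\<integral>\<^sup>+ x. e2ennreal (kl_integrand (p x) (q x)) \<partial>M)
   - enn2ereal (\<integral>\<^sup>+ x. e2ennreal (- kl_integrand (p x) (q x)) \<partial>M)"

text \<open>alpha-divergence; alpha = 1 gives KL[p||q], alpha = 0 gives KL[q||p] (limiting cases).\<close>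
definition alpha_div :: "'a measure \<Rightarrow> real \<Rightarrow> ('a \<Rightarrow> real) \<Rightarrow> ('a \<Rightarrow> real) \<Rightarrow> ereal" where
  "alpha_div M a p q =
     (if a = 1 then KL_div M p q
      else if a = 0 then KL_div M q p
      else (1 - enn2ereal (\<integral>\<^sup>+ x. alpha_integrand a (p x) (q x) \<partial>M)) / ereal (a * (1 - a)))"

end

theory Submission
  imports Defs
begin


lemma reflect_invol[simp]: "reflect th (reflect th t) = t"
  by (simp add: reflect_def)

lemma reflect_affine: "reflect th = (\<lambda>x. 2 *\<^sub>R th + (\<Sum>j\<in>Basis. ((-1::real) * (x \<bullet> j)) *\<^sub>R j))"
proof
  fix x :: 'a
  have "(\<Sum>j\<in>Basis. ((-1::real) * (x \<bullet> j)) *\<^sub>R j) = - (\<Sum>j\<in>Basis. (x \<bullet> j) *\<^sub>R j)"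
    by (simp add: sum_negf[symmetric])
  then show "reflect th x = 2 *\<^sub>R th + (\<Sum>j\<in>Basis. ((-1::real) * (x \<bullet> j)) *\<^sub>R j)"
    by (simp add: reflect_def euclidean_representation)
qed

lemma lebesgue_reflect:
  shows "lebesgue = distr lebesgue lebesgue (reflect th)"
    and "reflect th \<in> lebesgue \<rightarrow>\<^sub>M lebesgue"
proof -
  have c: "\<And>j. j \<in> (Basis::'a set) \<Longrightarrow> (\<lambda>_. -1::real) j \<noteq> 0" by simp
  note L = lebesgue_affine_euclidean[OF c, where t="2 *\<^sub>R th"]
  show "reflect th \<in> lebesgue \<rightarrow>\<^sub>M lebesgue"
    using lebesgue_affine_measurable[OF c, where t="2 *\<^sub>R th"] by (simp add: reflect_affine)
  show "lebesgue = distr lebesgue lebesgue (reflect th)"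
    using L by (simp add: reflect_affine density_1)
qed

lemma reflect_mem:
  assumes "symmetric_set th \<Theta>"
  shows "reflect th t \<in> \<Theta> \<longleftrightarrow> t \<in> \<Theta>"
  using assms unfolding symmetric_set_def by (metis reflect_invol)

lemma reflect_meas_on:
  assumes "\<Theta> \<in> sets lebesgue" "symmetric_set th \<Theta>"
  shows "reflect th \<in> lebesgue_on \<Theta> \<rightarrow>\<^sub>M lebesgue_on \<Theta>"
  by (rule measurable_restrict_space3[OF lebesgue_reflect(2)])
     (use reflect_mem[OF assms(2)] in auto)

lemma nn_integral_reflect:
  fixes h :: "'a::euclidean_space \<Rightarrow> ennreal"
  assumes S: "\<Theta> \<in> sets lebesgue" and sym: "symmetric_set th \<Theta>"
    and h: "h \<in> borel_measurable (lebesgue_on \<Theta>)"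
  shows "(\<integral>\<^sup>+x. h (reflect th x) \<partial>lebesgue_on \<Theta>) = (\<integral>\<^sup>+x. h x \<partial>lebesgue_on \<Theta>)"
proof -
  have S': "\<Theta> \<inter> space lebesgue \<in> sets lebesgue" using S by simp
  let ?g = "\<lambda>x. h x * indicator \<Theta> x"
  have g: "?g \<in> borel_measurable lebesgue"
    using h borel_measurable_restrict_space_iff_ennreal[OF S'] by simp
  have "(\<integral>\<^sup>+x. h (reflect th x) \<partial>lebesgue_on \<Theta>) = (\<integral>\<^sup>+x. h (reflect th x) * indicator \<Theta> x \<partial>lebesgue)"
    by (rule nn_integral_restrict_space[OF S'])
  also have "\<dots> = (\<integral>\<^sup>+x. ?g (reflect th x) \<partial>lebesgue)"
    using reflect_mem[OF sym] by (intro nn_integral_cong) (simp add: indicator_def)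
  also have "\<dots> = (\<integral>\<^sup>+x. ?g x \<partial>distr lebesgue lebesgue (reflect th))"
    using g by (subst nn_integral_distr[OF lebesgue_reflect(2)]) simp_all
  also have "\<dots> = (\<integral>\<^sup>+x. ?g x \<partial>lebesgue)"
    using lebesgue_reflect(1)[of th] by simp
  also have "\<dots> = (\<integral>\<^sup>+x. h x \<partial>lebesgue_on \<Theta>)"
    by (rule nn_integral_restrict_space[OF S', symmetric])
  finally show ?thesis .
qed



lemma pair_le:
  fixes G G' H H' :: "'a::euclidean_space \<Rightarrow> ennreal"
  assumes S: "\<Theta> \<in> sets lebesgue" and sym: "symmetric_set th \<Theta>"
    and [measurable]: "G \<in> borel_measurable (lebesgue_on \<Theta>)" "G' \<in> borel_measurable (lebesgue_on \<Theta>)"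
      "H \<in> borel_measurable (lebesgue_on \<Theta>)" "H' \<in> borel_measurable (lebesgue_on \<Theta>)"
    and pt: "\<forall>t\<in>\<Theta>. G t + G (reflect th t) + 2 * H' t \<le> G' t + G' (reflect th t) + 2 * H t"
  shows "(\<integral>\<^sup>+x. G x \<partial>lebesgue_on \<Theta>) + (\<integral>\<^sup>+x. H' x \<partial>lebesgue_on \<Theta>)
       \<le> (\<integral>\<^sup>+x. G' x \<partial>lebesgue_on \<Theta>) + (\<integral>\<^sup>+x. H x \<partial>lebesgue_on \<Theta>)"
proof -
  let ?M = "lebesgue_on \<Theta>"
  have r[measurable]: "reflect th \<in> ?M \<rightarrow>\<^sub>M ?M" by (rule reflect_meas_on[OF S sym])
  have Gr[measurable]: "(\<lambda>x. G (reflect th x)) \<in> borel_measurable ?M" "(\<lambda>x. G' (reflect th x)) \<in> borel_measurable ?M"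
    by measurable
  have c1: "(\<integral>\<^sup>+x. 2 * H' x \<partial>?M) = 2 * (\<integral>\<^sup>+x. H' x \<partial>?M)"
    "(\<integral>\<^sup>+x. 2 * H x \<partial>?M) = 2 * (\<integral>\<^sup>+x. H x \<partial>?M)"
    by (simp_all add: nn_integral_cmult)
  have "2 * ((\<integral>\<^sup>+x. G x \<partial>?M) + (\<integral>\<^sup>+x. H' x \<partial>?M))
      = (\<integral>\<^sup>+x. G x \<partial>?M) + (\<integral>\<^sup>+x. G (reflect th x) \<partial>?M) + (\<integral>\<^sup>+x. 2 * H' x \<partial>?M)"
    using nn_integral_reflect[OF S sym, of G] c1 by (simp add: distrib_left mult_2)
  also have "\<dots> = (\<integral>\<^sup>+x. G x + G (reflect th x) + 2 * H' x \<partial>?M)"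
    by (simp add: nn_integral_add)
  also have "\<dots> \<le> (\<integral>\<^sup>+x. G' x + G' (reflect th x) + 2 * H x \<partial>?M)"
    using pt by (intro nn_integral_mono) simp
  also have "\<dots> = (\<integral>\<^sup>+x. G' x \<partial>?M) + (\<integral>\<^sup>+x. G' (reflect th x) \<partial>?M) + (\<integral>\<^sup>+x. 2 * H x \<partial>?M)"
    by (simp add: nn_integral_add)
  also have "\<dots> = 2 * ((\<integral>\<^sup>+x. G' x \<partial>?M) + (\<integral>\<^sup>+x. H x \<partial>?M))"
    using nn_integral_reflect[OF S sym, of G'] c1 by (simp add: distrib_left mult_2)
  finally show ?thesis by (subst (asm) ennreal_mult_le_mult_iff) auto
qed

lemma pair_eq:
  fixes G G' H H' :: "'a::euclidean_space \<Rightarrow> ennreal"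
  assumes S: "\<Theta> \<in> sets lebesgue" and sym: "symmetric_set th \<Theta>"
    and [measurable]: "G \<in> borel_measurable (lebesgue_on \<Theta>)" "G' \<in> borel_measurable (lebesgue_on \<Theta>)"
      "H \<in> borel_measurable (lebesgue_on \<Theta>)" "H' \<in> borel_measurable (lebesgue_on \<Theta>)"
    and pt: "\<forall>t\<in>\<Theta>. G t + G (reflect th t) + 2 * H' t = G' t + G' (reflect th t) + 2 * H t"
  shows "(\<integral>\<^sup>+x. G x \<partial>lebesgue_on \<Theta>) + (\<integral>\<^sup>+x. H' x \<partial>lebesgue_on \<Theta>)
       = (\<integral>\<^sup>+x. G' x \<partial>lebesgue_on \<Theta>) + (\<integral>\<^sup>+x. H x \<partial>lebesgue_on \<Theta>)"
proof (rule antisym)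
  show "(\<integral>\<^sup>+x. G x \<partial>lebesgue_on \<Theta>) + (\<integral>\<^sup>+x. H' x \<partial>lebesgue_on \<Theta>)
       \<le> (\<integral>\<^sup>+x. G' x \<partial>lebesgue_on \<Theta>) + (\<integral>\<^sup>+x. H x \<partial>lebesgue_on \<Theta>)"
    by (rule pair_le[OF S sym]) (use pt in auto)
  show "(\<integral>\<^sup>+x. G' x \<partial>lebesgue_on \<Theta>) + (\<integral>\<^sup>+x. H x \<partial>lebesgue_on \<Theta>)
       \<le> (\<integral>\<^sup>+x. G x \<partial>lebesgue_on \<Theta>) + (\<integral>\<^sup>+x. H' x \<partial>lebesgue_on \<Theta>)"
    by (rule pair_le[OF S sym]) (use pt in auto)
qed

lemma pair_eq2:
  fixes G H :: "'a::euclidean_space \<Rightarrow> ennreal"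
  assumes S: "\<Theta> \<in> sets lebesgue" and sym: "symmetric_set th \<Theta>"
    and [measurable]: "G \<in> borel_measurable (lebesgue_on \<Theta>)" "H \<in> borel_measurable (lebesgue_on \<Theta>)"
    and pt: "\<forall>t\<in>\<Theta>. G t + G (reflect th t) = 2 * H t"
  shows "(\<integral>\<^sup>+x. G x \<partial>lebesgue_on \<Theta>) = (\<integral>\<^sup>+x. H x \<partial>lebesgue_on \<Theta>)"
  using pair_eq[OF S sym, of G "\<lambda>_. 0" H "\<lambda>_. 0"] pt by simp

lemma pair_le2:
  fixes G H :: "'a::euclidean_space \<Rightarrow> ennreal"
  assumes S: "\<Theta> \<in> sets lebesgue" and sym: "symmetric_set th \<Theta>"
    and [measurable]: "G \<in> borel_measurable (lebesgue_on \<Theta>)" "H \<in> borel_measurable (lebesgue_on \<Theta>)"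
    and pt: "\<forall>t\<in>\<Theta>. 2 * H t \<le> G t + G (reflect th t)"
  shows "(\<integral>\<^sup>+x. H x \<partial>lebesgue_on \<Theta>) \<le> (\<integral>\<^sup>+x. G x \<partial>lebesgue_on \<Theta>)"
  using pair_le[OF S sym, of "\<lambda>_. 0" G "\<lambda>_. 0" H] pt by simp

lemma pair_ge2:
  fixes G H :: "'a::euclidean_space \<Rightarrow> ennreal"
  assumes S: "\<Theta> \<in> sets lebesgue" and sym: "symmetric_set th \<Theta>"
    and [measurable]: "G \<in> borel_measurable (lebesgue_on \<Theta>)" "H \<in> borel_measurable (lebesgue_on \<Theta>)"
    and pt: "\<forall>t\<in>\<Theta>. G t + G (reflect th t) \<le> 2 * H t"
  shows "(\<integral>\<^sup>+x. G x \<partial>lebesgue_on \<Theta>) \<le> (\<integral>\<^sup>+x. H x \<partial>lebesgue_on \<Theta>)"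
  using pair_le[OF S sym, of G "\<lambda>_. 0" H "\<lambda>_. 0"] pt by simp



lemma powr_convex_gen:
  fixes a :: real assumes "a \<le> 0 \<or> 1 \<le> a"
  shows "convex_on {0<..} (\<lambda>x. x powr a)"
proof (rule f''_ge0_imp_convex[where f'="\<lambda>x. a * x powr (a - 1)" and f''="\<lambda>x. a * ((a - 1) * x powr (a - 1 - 1))"])
  show "convex {0::real<..}" by simp
  fix x :: real assume x: "x \<in> {0<..}"
  show "((\<lambda>x. x powr a) has_real_derivative a * x powr (a - 1)) (at x)"
    using x by (auto intro!: derivative_eq_intros)
  show "((\<lambda>x. a * x powr (a - 1)) has_real_derivative a * ((a - 1) * x powr (a - 1 - 1))) (at x)"
    using x by (auto intro!: derivative_eq_intros)
  have "0 \<le> a * (a - 1)" using assms by (auto simp: mult_nonpos_nonpos)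
  then show "0 \<le> a * ((a - 1) * x powr (a - 1 - 1))"
    using x by (simp add: mult.assoc[symmetric])
qed

lemma powr_concave_gen:
  fixes a :: real assumes "0 \<le> a" "a \<le> 1"
  shows "concave_on {0<..} (\<lambda>x. x powr a)"
proof (rule f''_le0_imp_concave[where f'="\<lambda>x. a * x powr (a - 1)" and f''="\<lambda>x. a * ((a - 1) * x powr (a - 1 - 1))"])
  show "convex {0::real<..}" by simp
  fix x :: real assume x: "x \<in> {0<..}"
  show "((\<lambda>x. x powr a) has_real_derivative a * x powr (a - 1)) (at x)"
    using x by (auto intro!: derivative_eq_intros)
  show "((\<lambda>x. a * x powr (a - 1)) has_real_derivative a * ((a - 1) * x powr (a - 1 - 1))) (at x)"
    using x by (auto intro!: derivative_eq_intros)
  have "a * (a - 1) \<le> 0" using assms by (auto simp: mult_nonneg_nonpos)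
  then show "a * ((a - 1) * x powr (a - 1 - 1)) \<le> 0"
    using x by (simp add: mult.assoc[symmetric] mult_nonpos_nonneg)
qed

lemma powr_mid_convex:
  fixes a x y :: real assumes "a \<le> 0 \<or> 1 \<le> a" "x > 0" "y > 0"
  shows "2 * ((x + y) / 2) powr a \<le> x powr a + y powr a"
proof -
  have "((1 - 1/2) *\<^sub>R x + (1/2) *\<^sub>R y) powr a \<le> (1 - 1/2) * x powr a + (1/2) * y powr a"
    by (rule convex_onD[OF powr_convex_gen[OF assms(1)]]) (use assms in auto)
  then show ?thesis by (simp add: field_simps)
qed

lemma powr_mid_concave:
  fixes a x y :: real assumes "0 \<le> a" "a \<le> 1" "x > 0" "y > 0"
  shows "x powr a + y powr a \<le> 2 * ((x + y) / 2) powr a"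
proof -
  have "convex_on {0<..} (\<lambda>x. - (x powr a))"
    using powr_concave_gen[OF assms(1,2)] by (simp add: concave_on_def)
  then have "- (((1 - 1/2) *\<^sub>R x + (1/2) *\<^sub>R y) powr a) \<le> (1 - 1/2) * - (x powr a) + (1/2) * - (y powr a)"
    by (rule convex_onD) (use assms in auto)
  then show ?thesis by (simp add: field_simps)
qed



lemma ai_pos:
  assumes "q > 0" "p \<ge> 0" "a > 0"
  shows "alpha_integrand a p q = ennreal (p powr a * q powr (1 - a))"
  using assms by (auto simp: alpha_integrand_def)

lemma ai_q0:
  assumes "p \<ge> 0"
  shows "alpha_integrand a p 0 = (if p > 0 \<and> \<not> a < 1 then \<infinity> else 0)"
  using assms by (auto simp: alpha_integrand_def)

lemma ai_neg:
  assumes "q > 0" "a < 0"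
  shows "alpha_integrand a 0 q = \<infinity>"
  using assms by (auto simp: alpha_integrand_def)

lemma two_powr_le: "a \<le> 1 \<Longrightarrow> (2::real) powr a \<le> 2"
  using powr_mono[of a 1 "2::real"] by simp
lemma two_powr_ge: "1 \<le> a \<Longrightarrow> 2 \<le> (2::real) powr a"
  using powr_mono[of 1 a "2::real"] by simp

lemma mid_concave_real:
  fixes a p1 p2 :: real assumes "0 < a" "a < 1" "p1 \<ge> 0" "p2 \<ge> 0"
  shows "p1 powr a + p2 powr a \<le> 2 * ((p1 + p2) / 2) powr a"
proof -
  have one: "p powr a \<le> 2 * (p / 2) powr a" if "p \<ge> 0" for p :: real
  proof -
    have "p powr a * 2 powr a \<le> p powr a * 2" using two_powr_le[of a] assms
      by (intro mult_left_mono) auto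
    then show ?thesis using that by (simp add: powr_divide field_simps)
  qed
  show ?thesis
  proof (cases "p1 = 0 \<or> p2 = 0")
    case True then show ?thesis using one assms assms by auto
  next
    case False then show ?thesis using powr_mid_concave[of a p1 p2] assms by auto
  qed
qed

lemma mid_convex_real:
  fixes a p1 p2 :: real assumes "1 < a" "p1 \<ge> 0" "p2 \<ge> 0"
  shows "2 * ((p1 + p2) / 2) powr a \<le> p1 powr a + p2 powr a"
proof -
  have one: "2 * (p / 2) powr a \<le> p powr a" if "p \<ge> 0" for p :: real
  proof -
    have "p powr a * 2 \<le> p powr a * 2 powr a" using two_powr_ge[of a] assms
      by (intro mult_left_mono) auto
    then show ?thesis using that by (simp add: powr_divide field_simps)
  qed
  show ?thesis
  proof (cases "p1 = 0 \<or> p2 = 0")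
    case True then show ?thesis using one assms assms by auto
  next
    case False then show ?thesis using powr_mid_convex[of a p1 p2] assms by auto
  qed
qed

lemma ennreal_two_mult: "2 * ennreal x = ennreal (2 * x)"
proof (cases "x \<ge> 0")
  case True then show ?thesis using ennreal_mult[of 2 x] by simp
next
  case False then show ?thesis by (simp add: ennreal_neg)
qed

lemma ai_concave:
  assumes "0 < a" "a < 1" "p1 \<ge> 0" "p2 \<ge> 0" "fv \<ge> 0"
  shows "alpha_integrand a p1 fv + alpha_integrand a p2 fv \<le> 2 * alpha_integrand a ((p1 + p2) / 2) fv"
proof (cases "fv = 0")
  case True then show ?thesis using assms by (simp add: ai_q0)
next
  case False
  then have fv: "fv > 0" using assms by simp
  have "p1 powr a * fv powr (1 - a) + p2 powr a * fv powr (1 - a) \<le> 2 * (((p1 + p2) / 2) powr a * fv powr (1 - a))"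
    using mid_concave_real[OF assms(1-4)] fv
    by (metis (no_types, lifting) distrib_right mult.assoc mult_right_mono powr_ge_zero)
  then show ?thesis using assms fv
    by (simp add: ai_pos ennreal_two_mult ennreal_plus[symmetric] ennreal_leI del: ennreal_plus)
qed

lemma ai_convex:
  assumes "a < 0 \<or> 1 < a" "p1 \<ge> 0" "p2 \<ge> 0" "fv \<ge> 0"
  shows "2 * alpha_integrand a ((p1 + p2) / 2) fv \<le> alpha_integrand a p1 fv + alpha_integrand a p2 fv"
proof (cases "fv = 0")
  case True then show ?thesis using assms
    by (auto simp: ai_q0 add_pos_nonneg add_nonneg_pos)
next
  case False
  then have fv: "fv > 0" using assms by simp
  show ?thesis
  proof (cases "a < 0")
    case True
    show ?thesis
    proof (cases "p1 = 0 \<or> p2 = 0")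
      case True then show ?thesis using \<open>a < 0\<close> fv by (auto simp: ai_neg)
    next
      case False
      then have p: "p1 > 0" "p2 > 0" using assms by auto
      have "2 * (((p1 + p2) / 2) powr a * fv powr (1 - a)) \<le> p1 powr a * fv powr (1 - a) + p2 powr a * fv powr (1 - a)"
        using powr_mid_convex[of a p1 p2] p True fv
        by (metis (no_types, lifting) distrib_right less_eq_real_def mult.assoc mult_right_mono powr_ge_zero)
      then show ?thesis using p fv
        by (simp add: alpha_integrand_def ennreal_two_mult ennreal_plus[symmetric] ennreal_leI del: ennreal_plus)
    qed
  next
    case False
    then have a: "1 < a" using assms by simp
    have "2 * (((p1 + p2) / 2) powr a * fv powr (1 - a)) \<le> p1 powr a * fv powr (1 - a) + p2 powr a * fv powr (1 - a)"
      using mid_convex_real[OF a assms(2,3)] fv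
      by (metis (no_types, lifting) distrib_right mult.assoc mult_right_mono powr_ge_zero)
    then show ?thesis using assms fv a
      by (simp add: ai_pos ennreal_two_mult ennreal_plus[symmetric] ennreal_leI del: ennreal_plus)
  qed
qed



definition skw :: "real \<Rightarrow> real \<Rightarrow> real" where
  "skw a b = (if a = 0 \<and> a + b = 0 then 1/2 else a / (a + b))"

lemma skw_zero: "a \<ge> 0 \<Longrightarrow> b \<ge> 0 \<Longrightarrow> a + b = 0 \<Longrightarrow> skw a b = 1/2"
  by (simp add: skw_def)
lemma skw_pos: "a + b > 0 \<Longrightarrow> skw a b = a / (a + b)"
  by (auto simp: skw_def)

lemma tv_pair:
  fixes a b c fv :: real
  assumes "a \<ge> 0" "b \<ge> 0" "c > 0" "fv \<ge> 0"
  shows "\<bar>a/c - 2*fv* skw a b\<bar> + \<bar>b/c - 2*fv* skw b a\<bar> = 2 * \<bar>(a/c + b/c)/2 - fv\<bar>"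
proof (cases "a + b = 0")
  case True
  then have "a = 0" "b = 0" using assms by auto
  then show ?thesis by (simp add: skw_def)
next
  case False
  then have s: "a + b > 0" using assms by simp
  define K where "K = 1/c - 2*fv/(a+b)"
  have e1: "a/c - 2*fv* skw a b = a * K" using s by (simp add: skw_pos K_def field_simps)
  have e2: "b/c - 2*fv* skw b a = b * K" using s by (simp add: skw_pos K_def field_simps add.commute)
  have s': "a + b \<noteq> 0" using s by simp
  have e3: "(a/c + b/c)/2 - fv = (a + b) * K / 2"
  proof -
    have "(a + b) * K = (a + b) / c - 2 * fv" using s' by (simp add: K_def right_diff_distrib)
    then show ?thesis by (simp add: add_divide_distrib)
  qed
  have e4: "\<bar>(a + b) * K\<bar> = a * \<bar>K\<bar> + b * \<bar>K\<bar>"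
  proof -
    have "\<bar>(a + b) * K\<bar> = (a + b) * \<bar>K\<bar>" using assms by (metis abs_mult abs_of_nonneg add_nonneg_nonneg)
    then show ?thesis by (simp only: distrib_right)
  qed
  show ?thesis unfolding e1 e2 e3 using assms e4 by (simp add: abs_mult)
qed


lemma pow_split:
  fixes x c u a :: real
  assumes "x > 0" "c > 0" "u > 0"
  shows "(x / c) powr a * (u * x) powr (1 - a) = x * ((1/c) powr a * u powr (1 - a))"
proof -
  have "(x / c) powr a * (u * x) powr (1 - a) = (x powr a * x powr (1 - a)) * ((1/c) powr a * u powr (1 - a))"
    using assms by (simp add: powr_mult powr_divide divide_inverse powr_minus)
  also have "x powr a * x powr (1 - a) = x" using assms by (simp add: powr_add[symmetric])
  finally show ?thesis .
qed




lemma t1: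
  fixes a b c fv :: real
  assumes "a \<ge> 0" "b \<ge> 0" "c > 0" "fv \<ge> 0" "a + b = 0"
  shows "alpha_integrand \<alpha> (a/c) (2*fv * skw a b) + alpha_integrand \<alpha> (b/c) (2*fv * skw b a)
         = 2 * alpha_integrand \<alpha> ((a/c + b/c)/2) fv"
proof -
  have "a = 0" "b = 0" using assms by auto
  then show ?thesis by (simp add: skw_def flip: mult_2)
qed

lemma t2:
  fixes x c :: real
  assumes "x \<ge> 0" "c > 0"
  shows "alpha_integrand \<alpha> (x/c) 0 = (if x > 0 \<and> \<not> \<alpha> < 1 then \<infinity> else 0)"
  using ai_q0[of "x/c" \<alpha>] assms by (simp add: zero_less_divide_iff)


lemma alpha_pair:
  fixes a b c fv :: real
  assumes "a \<ge> 0" "b \<ge> 0" "c > 0" "fv \<ge> 0"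
  shows "alpha_integrand \<alpha> (a/c) (2*fv * skw a b) + alpha_integrand \<alpha> (b/c) (2*fv * skw b a)
         = 2 * alpha_integrand \<alpha> ((a/c + b/c)/2) fv"
proof (cases "a + b = 0")
  case True
  then show ?thesis using t1 assms by blast
next
  case False
  then have s: "a + b > 0" using assms by simp
  have pb: "(a/c + b/c)/2 > 0" using s assms by (simp add: add_divide_distrib[symmetric])
  show ?thesis
  proof (cases "fv = 0")
    case True
    have z: "2*fv * skw a b = 0" "2*fv * skw b a = 0" using True by simp_all
    have r: "alpha_integrand \<alpha> ((a/c + b/c)/2) 0 = (if \<not> \<alpha> < 1 then \<infinity> else 0)"
      using ai_q0[of "(a/c + b/c)/2" \<alpha>] pb by simp
    show ?thesis unfolding z True r t2[OF assms(1,3)] t2[OF assms(2,3)] using s assms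
      by (cases "\<alpha> < 1"; cases "a > 0"; cases "b > 0") (auto simp: alpha_integrand_def)
  next
    case False
    then have fv: "fv > 0" using assms by simp
    define K where "K = (1/c) powr \<alpha> * (2*fv/(a+b)) powr (1 - \<alpha>)"
    have tm: "alpha_integrand \<alpha> (x/c) (2*fv*(x/(a+b))) = ennreal (x * K)" if x: "x \<ge> 0" for x
    proof (cases "x = 0")
      case True then show ?thesis by (simp add: alpha_integrand_def)
    next
      case False
      then have xp: "x > 0" using x by simp
      have e: "2*fv*(x/(a+b)) = (2*fv/(a+b)) * x" by simp
      have pos: "x / c > 0" "(2*fv/(a+b)) * x > 0" using xp assms s fv by auto
      show ?thesis unfolding e using pos pow_split[of x c "2*fv/(a+b)" \<alpha>] xp assms s fv
        unfolding alpha_integrand_def K_def by simp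
    qed
    have Kp: "K \<ge> 0" by (simp add: K_def)
    have w1: "skw a b = a/(a+b)" and w2: "skw b a = b/(a+b)"
      using s by (simp_all add: skw_pos add.commute)
    have lhs: "alpha_integrand \<alpha> (a/c) (2*fv * skw a b) + alpha_integrand \<alpha> (b/c) (2*fv * skw b a)
        = ennreal ((a + b) * K)"
      unfolding w1 w2 tm[OF assms(1)] tm[OF assms(2)] distrib_right
      using assms Kp by (simp add: ennreal_plus)
    have "(a + b) * K = ((a+b)/c) powr \<alpha> * (2*fv) powr (1 - \<alpha>)"
      using pow_split[of "a+b" c "2*fv/(a+b)" \<alpha>] s assms fv by (simp add: K_def)
    also have "\<dots> = (2 * ((a/c + b/c)/2)) powr \<alpha> * (2*fv) powr (1 - \<alpha>)"
      by (simp add: add_divide_distrib)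
    also have "\<dots> = (2 powr \<alpha> * 2 powr (1 - \<alpha>)) * (((a/c + b/c)/2) powr \<alpha> * fv powr (1 - \<alpha>))"
      unfolding powr_mult[of 2 "(a/c + b/c)/2" \<alpha>]
        powr_mult[of 2 fv "1 - \<alpha>"]
      by (simp only: mult_ac)
    also have "2 powr \<alpha> * 2 powr (1 - \<alpha>) = (2::real)" by (simp add: powr_add[symmetric])
    finally have eq: "(a + b) * K = 2 * (((a/c + b/c)/2) powr \<alpha> * fv powr (1 - \<alpha>))" .
    have r: "alpha_integrand \<alpha> ((a/c + b/c)/2) fv = ennreal (((a/c + b/c)/2) powr \<alpha> * fv powr (1 - \<alpha>))"
      using pb fv unfolding alpha_integrand_def by simp
    show ?thesis unfolding lhs r ennreal_two_mult eq ..
  qed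
qed



lemma ennreal_maxz: "ennreal r = ennreal (max r 0)"
  by (simp add: max_def ennreal_neg)

lemma ennreal_sum3: "ennreal u + ennreal v + 2 * ennreal w = ennreal (max u 0 + max v 0 + 2 * max w 0)"
  by (subst (1 2 3) ennreal_maxz) (simp add: ennreal_two_mult ennreal_plus[symmetric] del: ennreal_plus)

lemma split_real_eq:
  fixes x y z :: real
  assumes "x + y = 2 * z"
  shows "ennreal x + ennreal y + 2 * ennreal (- z) = ennreal (- x) + ennreal (- y) + 2 * ennreal z"
proof -
  have "ennreal x + ennreal y + 2 * ennreal (- z) = ennreal (max x 0 + max y 0 + 2 * max (-z) 0)"
    by (rule ennreal_sum3)
  also have "\<dots> = ennreal (max (-x) 0 + max (-y) 0 + 2 * max z 0)"
    using assms by (intro arg_cong[where f=ennreal]) (auto simp: max_def)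
  also have "\<dots> = ennreal (- x) + ennreal (- y) + 2 * ennreal z"
    by (rule ennreal_sum3[symmetric])
  finally show ?thesis .
qed

lemma split_real_le:
  fixes x y z :: real
  assumes "2 * z \<le> x + y"
  shows "ennreal (- x) + ennreal (- y) + 2 * ennreal z \<le> ennreal x + ennreal y + 2 * ennreal (- z)"
proof -
  have "ennreal (- x) + ennreal (- y) + 2 * ennreal z = ennreal (max (-x) 0 + max (-y) 0 + 2 * max z 0)"
    by (rule ennreal_sum3)
  also have "\<dots> \<le> ennreal (max x 0 + max y 0 + 2 * max (-z) 0)"
    using assms by (intro ennreal_leI) (auto simp: max_def)
  also have "\<dots> = ennreal x + ennreal y + 2 * ennreal (- z)"
    by (rule ennreal_sum3[symmetric])
  finally show ?thesis .
qed

lemma split_eq: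
  fixes x y z :: ereal
  assumes "x \<noteq> -\<infinity>" "y \<noteq> -\<infinity>" "z \<noteq> -\<infinity>" "x + y = 2 * z"
  shows "e2ennreal x + e2ennreal y + 2 * e2ennreal (- z) = e2ennreal (- x) + e2ennreal (- y) + 2 * e2ennreal z"
  using assms
proof (cases x; cases y; cases z)
  fix r s t assume "x = ereal r" "y = ereal s" "z = ereal t"
  then show ?thesis using assms split_real_eq[of r s t] by simp
qed (auto simp: e2ennreal_neg)

lemma split_le:
  fixes x y z :: ereal
  assumes "x \<noteq> -\<infinity>" "y \<noteq> -\<infinity>" "z \<noteq> -\<infinity>" "2 * z \<le> x + y"
  shows "e2ennreal (- x) + e2ennreal (- y) + 2 * e2ennreal z \<le> e2ennreal x + e2ennreal y + 2 * e2ennreal (- z)"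
  using assms
proof (cases x; cases y; cases z)
  fix r s t assume "x = ereal r" "y = ereal s" "z = ereal t"
  then show ?thesis using assms split_real_le[of t r s] by simp
qed (auto simp: e2ennreal_neg)



lemma kl_not_minf: "kl_integrand p q \<noteq> -\<infinity>"
  by (simp add: kl_integrand_def)

lemma ereal_two_times: "2 * (x::ereal) = x + x"
  by (cases x) auto

lemma kl_pair:
  fixes a b c fv :: real
  assumes "a \<ge> 0" "b \<ge> 0" "c > 0" "fv \<ge> 0"
  shows "kl_integrand (a/c) (2*fv * skw a b) + kl_integrand (b/c) (2*fv * skw b a)
         = 2 * kl_integrand ((a/c + b/c)/2) fv"
proof (cases "a + b = 0")
  case True
  then have "a = 0" "b = 0" using assms by auto
  then show ?thesis by (simp add: kl_integrand_def)
next
  case False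
  then have s: "a + b > 0" using assms by simp
  have pb: "(a/c + b/c)/2 > 0" using s assms by (simp add: add_divide_distrib[symmetric])
  show ?thesis
  proof (cases "fv = 0")
    case True
    have q0: "kl_integrand (x/c) 0 = (if x > 0 then \<infinity> else 0)" if "x \<ge> 0" for x
      using that assms(3) by (auto simp: kl_integrand_def)
    have z: "2*fv * skw a b = 0" "2*fv * skw b a = 0" using True by simp_all
    have r: "kl_integrand ((a/c + b/c)/2) 0 = \<infinity>" using pb by (simp add: kl_integrand_def)
    show ?thesis unfolding z True r q0[OF assms(1)] q0[OF assms(2)] using s assms
      by (cases "a > 0"; cases "b > 0") (auto simp: kl_integrand_def)
  next
    case False
    then have fv: "fv > 0" using assms by simp
    define K where "K = (1/c) * ln ((a+b) / (2*c*fv))"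
    have tm: "kl_integrand (x/c) (2*fv*(x/(a+b))) = ereal (x * K)" if x: "x \<ge> 0" for x
    proof (cases "x = 0")
      case True then show ?thesis by (simp add: kl_integrand_def)
    next
      case False
      then have xp: "x > 0" using x by simp
      have e: "(x/c) / (2*fv*(x/(a+b))) = (a+b) / (2*c*fv)" using xp assms s fv by (simp add: field_simps)
      have "2*fv*(x/(a+b)) \<noteq> 0" using xp s fv by simp
      then show ?thesis using xp assms unfolding kl_integrand_def e K_def by simp
    qed
    have w1: "skw a b = a/(a+b)" and w2: "skw b a = b/(a+b)"
      using s by (simp_all add: skw_pos add.commute)
    have lhs: "kl_integrand (a/c) (2*fv * skw a b) + kl_integrand (b/c) (2*fv * skw b a)
        = ereal ((a + b) * K)"
      unfolding w1 w2 tm[OF assms(1)] tm[OF assms(2)] by (simp add: distrib_right)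
    have e2: "((a/c + b/c)/2) / fv = (a+b) / (2*c*fv)" using assms fv by (simp add: field_simps)
    have eq: "(a + b) * K = 2 * (((a/c + b/c)/2) * ln (((a/c + b/c)/2) / fv))"
      unfolding e2 K_def using assms by (simp add: field_simps)
    have r: "kl_integrand ((a/c + b/c)/2) fv = ereal (((a/c + b/c)/2) * ln (((a/c + b/c)/2) / fv))"
      using pb fv unfolding kl_integrand_def by simp
    show ?thesis unfolding lhs r eq by simp
  qed
qed

lemma kl_rev_pair:
  fixes a b c fv :: real
  assumes "a \<ge> 0" "b \<ge> 0" "c > 0" "fv \<ge> 0"
  shows "kl_integrand (2*fv * skw a b) (a/c) + kl_integrand (2*fv * skw b a) (b/c)
         = 2 * kl_integrand fv ((a/c + b/c)/2)"
proof (cases "a + b = 0")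
  case True
  then have "a = 0" "b = 0" using assms by auto
  then show ?thesis by (cases "fv = 0") (simp_all add: skw_def kl_integrand_def)
next
  case False
  then have s: "a + b > 0" using assms by simp
  have pb: "(a/c + b/c)/2 > 0" using s assms by (simp add: add_divide_distrib[symmetric])
  show ?thesis
  proof (cases "fv = 0")
    case True
    then show ?thesis by (simp add: kl_integrand_def)
  next
    case False
    then have fv: "fv > 0" using assms by simp
    define K where "K = (2*fv/(a+b)) * ln (2*fv*c/(a+b))"
    have tm: "kl_integrand (2*fv*(x/(a+b))) (x/c) = ereal (x * K)" if x: "x \<ge> 0" for x
    proof (cases "x = 0")
      case True then show ?thesis by (simp add: kl_integrand_def)
    next
      case False
      then have xp: "x > 0" using x by simp
      have e: "(2*fv*(x/(a+b))) / (x/c) = 2*fv*c/(a+b)" using xp assms(3) s by (simp add: divide_simps)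
      have "2*fv*(x/(a+b)) \<noteq> 0" "x / c \<noteq> 0" using xp s fv assms by auto
      then show ?thesis using xp assms unfolding kl_integrand_def e K_def by (simp add: field_simps)
    qed
    have w1: "skw a b = a/(a+b)" and w2: "skw b a = b/(a+b)"
      using s by (simp_all add: skw_pos add.commute)
    have lhs: "kl_integrand (2*fv * skw a b) (a/c) + kl_integrand (2*fv * skw b a) (b/c)
        = ereal ((a + b) * K)"
      unfolding w1 w2 tm[OF assms(1)] tm[OF assms(2)] by (simp add: distrib_right)
    have e2: "fv / ((a/c + b/c)/2) = 2*fv*c/(a+b)" using assms fv s by (simp add: field_simps)
    have eq: "(a + b) * K = 2 * (fv * ln (fv / ((a/c + b/c)/2)))"
      unfolding e2 K_def using s by (simp add: field_simps)
    have r: "kl_integrand fv ((a/c + b/c)/2) = ereal (fv * ln (fv / ((a/c + b/c)/2)))"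
      using pb fv unfolding kl_integrand_def by simp
    show ?thesis unfolding lhs r eq by simp
  qed
qed



lemma log_sum_real:
  fixes p1 p2 f :: real
  assumes "p1 > 0" "p2 > 0" "f > 0"
  shows "2 * (((p1 + p2)/2) * ln (((p1 + p2)/2) / f)) \<le> p1 * ln (p1 / f) + p2 * ln (p2 / f)"
proof -
  define m where "m = (p1 + p2) / 2"
  have m: "m > 0" using assms by (simp add: m_def)
  have one: "p - m \<le> p * ln (p / m)" if p: "p > 0" for p
  proof -
    have "ln (m / p) \<le> m / p - 1" using ln_le_minus_one[of "m/p"] m p by simp
    moreover have "ln (p / m) = - ln (m / p)" using m p by (simp add: ln_div)
    ultimately have "1 - m / p \<le> ln (p / m)" by simp
    then have "p * (1 - m / p) \<le> p * ln (p / m)" using p by (intro mult_left_mono) auto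
    moreover have "p * (1 - m / p) = p - m" using p by (simp add: field_simps)
    ultimately show ?thesis by linarith
  qed
  have spl: "ln (p / f) = ln (p / m) + ln (m / f)" if p: "p > 0" for p
    using p m assms(3) by (simp add: ln_div)
  have "p1 * ln (p1 / f) + p2 * ln (p2 / f) = p1 * ln (p1 / m) + p2 * ln (p2 / m) + (p1 + p2) * ln (m / f)"
    using spl[OF assms(1)] spl[OF assms(2)] by (simp add: algebra_simps)
  moreover have "(p1 + p2) * ln (m / f) = 2 * (m * ln (m / f))" by (simp add: m_def)
  moreover have "p1 + p2 - 2 * m = 0" by (simp add: m_def)
  ultimately show ?thesis using one[OF assms(1)] one[OF assms(2)] unfolding m_def[symmetric] by linarith
qed

lemma kl_convex:
  fixes p1 p2 fv :: real
  assumes "p1 \<ge> 0" "p2 \<ge> 0" "fv \<ge> 0"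
  shows "2 * kl_integrand ((p1 + p2)/2) fv \<le> kl_integrand p1 fv + kl_integrand p2 fv"
proof (cases "fv = 0")
  case True then show ?thesis using assms by (cases "p1 = 0"; cases "p2 = 0") (auto simp: kl_integrand_def)
next
  case False
  then have fv: "fv > 0" using assms by simp
  have half: "2 * ((p/2) * ln ((p/2) / fv)) \<le> p * ln (p / fv)" if p: "p > 0" for p
  proof -
    have "(p/2) / fv \<le> p / fv" using p fv by (intro divide_right_mono) auto
    then have "ln ((p/2) / fv) \<le> ln (p / fv)" using p fv by (subst ln_le_cancel_iff) auto
    then show ?thesis using p by (simp add: mult_left_mono)
  qed
  show ?thesis
  proof (cases "p1 = 0")
    case True
    then show ?thesis using half[of p2] assms fv by (cases "p2 = 0") (auto simp: kl_integrand_def)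
  next
    case False
    then have p1: "p1 > 0" using assms by simp
    show ?thesis
    proof (cases "p2 = 0")
      case True
      then show ?thesis using half[of p1] p1 fv by (auto simp: kl_integrand_def)
    next
      case False
      then have p2: "p2 > 0" using assms by simp
      show ?thesis using log_sum_real[OF p1 p2 fv] p1 p2 fv by (auto simp: kl_integrand_def)
    qed
  qed
qed

lemma kl_rev_convex:
  fixes p1 p2 fv :: real
  assumes "p1 \<ge> 0" "p2 \<ge> 0" "fv \<ge> 0"
  shows "2 * kl_integrand fv ((p1 + p2)/2) \<le> kl_integrand fv p1 + kl_integrand fv p2"
proof (cases "fv = 0")
  case True then show ?thesis by (simp add: kl_integrand_def)
next
  case False
  then have fv: "fv > 0" using assms by simp
  show ?thesis
  proof (cases "p1 = 0 \<or> p2 = 0")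
    case True then show ?thesis using fv by (auto simp: kl_integrand_def)
  next
    case False
    then have p1: "p1 > 0" and p2: "p2 > 0" using assms by auto
    define m where "m = (p1 + p2)/2"
    have m: "m > 0" using p1 p2 by (simp add: m_def)
    have "p1 * p2 \<le> m * m"
    proof -
      have "0 \<le> (p1 - p2)^2" by simp
      then show ?thesis by (simp add: m_def power2_eq_square algebra_simps)
    qed
    then have "ln (p1 * p2) \<le> ln (m * m)" using p1 p2 m by (subst ln_le_cancel_iff) auto
    then have "ln p1 + ln p2 \<le> 2 * ln m" using p1 p2 m by (simp add: ln_mult)
    then have "fv * (ln p1 + ln p2) \<le> fv * (2 * ln m)" using fv by (intro mult_left_mono) auto
    then have "2 * (fv * ln (fv / m)) \<le> fv * ln (fv / p1) + fv * ln (fv / p2)"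
      using fv p1 p2 m by (simp add: ln_div algebra_simps)
    then show ?thesis using fv p1 p2 m unfolding m_def[symmetric] by (simp add: kl_integrand_def)
  qed
qed



lemma meas_ai[measurable]:
  assumes [measurable]: "P \<in> borel_measurable N" "Q \<in> borel_measurable N"
  shows "(\<lambda>x. alpha_integrand a (P x) (Q x)) \<in> borel_measurable N"
  unfolding alpha_integrand_def by measurable

lemma meas_kl[measurable]:
  assumes [measurable]: "P \<in> borel_measurable N" "Q \<in> borel_measurable N"
  shows "(\<lambda>x. kl_integrand (P x) (Q x)) \<in> borel_measurable N"
  unfolding kl_integrand_def by measurable

lemma meas_skw[measurable]:
  assumes [measurable]: "P \<in> borel_measurable N" "Q \<in> borel_measurable N"
  shows "(\<lambda>x. skw (P x) (Q x)) \<in> borel_measurable N"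
  unfolding skw_def by measurable



lemma ediv_neg_mono:
  fixes u v :: ereal and d :: real
  assumes "d < 0" "u \<le> v"
  shows "v / ereal d \<le> u / ereal d"
  using assms by (cases u; cases v) (auto simp: divide_right_mono_neg)

lemma ediv_pos_mono:
  fixes u v :: ereal and d :: real
  assumes "d > 0" "u \<le> v"
  shows "u / ereal d \<le> v / ereal d"
  using assms by simp

lemma one_minus_mono:
  fixes X Y :: ennreal
  assumes "X \<le> Y"
  shows "1 - enn2ereal Y \<le> 1 - enn2ereal X"
  using assms by (intro ereal_minus_mono) (auto simp: less_eq_ennreal.rep_eq)

lemma kl_arith_le:
  fixes PF NF PH NH :: ennreal
  assumes "NF + PH \<le> PF + NH" "NF < top" "NH < top"
  shows "enn2ereal PH - enn2ereal NH \<le> enn2ereal PF - enn2ereal NF"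
proof (cases "PF = top")
  case True
  obtain nf where "NF = ennreal nf" "nf \<ge> 0" using assms(2) by (cases NF) auto
  then show ?thesis using True by simp
next
  case False
  then have "PF + NH < top" using assms(3) by (simp add: less_top)
  then have "PH < top" using assms(1) by (metis add.commute add_top not_top_less order_le_less_trans top_greatest ennreal_add_less_top)
  obtain pf where pf: "PF = ennreal pf" "pf \<ge> 0" using False by (cases PF) auto
  obtain nf where nf: "NF = ennreal nf" "nf \<ge> 0" using assms(2) by (cases NF) auto
  obtain ph where ph: "PH = ennreal ph" "ph \<ge> 0" using \<open>PH < top\<close> by (cases PH) auto
  obtain nh where nh: "NH = ennreal nh" "nh \<ge> 0" using assms(3) by (cases NH) auto
  have "nf + ph \<le> pf + nh" using assms(1) pf nf ph nh
    by (simp add: ennreal_plus[symmetric] del: ennreal_plus)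
  then show ?thesis using pf nf ph nh by simp
qed

lemma kl_arith_eq:
  fixes PF NF PH NH :: ennreal
  assumes "PF + NH = NF + PH" "NF < top" "NH < top"
  shows "enn2ereal PF - enn2ereal NF = enn2ereal PH - enn2ereal NH"
  by (rule antisym; rule kl_arith_le) (use assms in \<open>simp_all add: add.commute\<close>)



lemma KL_pair_eq:
  fixes F H :: "'a::euclidean_space \<Rightarrow> ereal"
  assumes S: "\<Theta> \<in> sets lebesgue" and sym: "symmetric_set th \<Theta>"
    and [measurable]: "F \<in> borel_measurable (lebesgue_on \<Theta>)" "H \<in> borel_measurable (lebesgue_on \<Theta>)"
    and nm: "\<And>t. F t \<noteq> -\<infinity>" "\<And>t. H t \<noteq> -\<infinity>"
    and pt: "\<forall>t\<in>\<Theta>. F t + F (reflect th t) = 2 * H t"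
    and NF: "(\<integral>\<^sup>+x. e2ennreal (- F x) \<partial>lebesgue_on \<Theta>) < top"
    and NH: "(\<integral>\<^sup>+x. e2ennreal (- H x) \<partial>lebesgue_on \<Theta>) < top"
  shows "enn2ereal (\<integral>\<^sup>+x. e2ennreal (F x) \<partial>lebesgue_on \<Theta>) - enn2ereal (\<integral>\<^sup>+x. e2ennreal (- F x) \<partial>lebesgue_on \<Theta>)
       = enn2ereal (\<integral>\<^sup>+x. e2ennreal (H x) \<partial>lebesgue_on \<Theta>) - enn2ereal (\<integral>\<^sup>+x. e2ennreal (- H x) \<partial>lebesgue_on \<Theta>)"
proof (rule kl_arith_eq[OF _ NF NH])
  show "(\<integral>\<^sup>+x. e2ennreal (F x) \<partial>lebesgue_on \<Theta>) + (\<integral>\<^sup>+x. e2ennreal (- H x) \<partial>lebesgue_on \<Theta>)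
      = (\<integral>\<^sup>+x. e2ennreal (- F x) \<partial>lebesgue_on \<Theta>) + (\<integral>\<^sup>+x. e2ennreal (H x) \<partial>lebesgue_on \<Theta>)"
    by (rule pair_eq[OF S sym]) (use pt nm in \<open>auto intro!: split_eq\<close>)
qed

lemma KL_pair_le:
  fixes F H :: "'a::euclidean_space \<Rightarrow> ereal"
  assumes S: "\<Theta> \<in> sets lebesgue" and sym: "symmetric_set th \<Theta>"
    and [measurable]: "F \<in> borel_measurable (lebesgue_on \<Theta>)" "H \<in> borel_measurable (lebesgue_on \<Theta>)"
    and nm: "\<And>t. F t \<noteq> -\<infinity>" "\<And>t. H t \<noteq> -\<infinity>"
    and pt: "\<forall>t\<in>\<Theta>. 2 * H t \<le> F t + F (reflect th t)"
    and NF: "(\<integral>\<^sup>+x. e2ennreal (- F x) \<partial>lebesgue_on \<Theta>) < top"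
    and NH: "(\<integral>\<^sup>+x. e2ennreal (- H x) \<partial>lebesgue_on \<Theta>) < top"
  shows "enn2ereal (\<integral>\<^sup>+x. e2ennreal (H x) \<partial>lebesgue_on \<Theta>) - enn2ereal (\<integral>\<^sup>+x. e2ennreal (- H x) \<partial>lebesgue_on \<Theta>)
       \<le> enn2ereal (\<integral>\<^sup>+x. e2ennreal (F x) \<partial>lebesgue_on \<Theta>) - enn2ereal (\<integral>\<^sup>+x. e2ennreal (- F x) \<partial>lebesgue_on \<Theta>)"
proof (rule kl_arith_le[OF _ NF NH])
  show "(\<integral>\<^sup>+x. e2ennreal (- F x) \<partial>lebesgue_on \<Theta>) + (\<integral>\<^sup>+x. e2ennreal (H x) \<partial>lebesgue_on \<Theta>)
      \<le> (\<integral>\<^sup>+x. e2ennreal (F x) \<partial>lebesgue_on \<Theta>) + (\<integral>\<^sup>+x. e2ennreal (- H x) \<partial>lebesgue_on \<Theta>)"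
    by (rule pair_le[OF S sym]) (use pt nm in \<open>auto intro!: split_le\<close>)
qed

lemma kl_neg_bound:
  fixes p q :: real assumes "p \<ge> 0" "q \<ge> 0"
  shows "e2ennreal (- kl_integrand p q) \<le> ennreal q"
proof -
  consider "p = 0" | "p > 0" "q = 0" | "p > 0" "q > 0" using assms by fastforce
  then show ?thesis
  proof cases
    case 3
    have "ln (q / p) \<le> q / p - 1" using ln_le_minus_one[of "q/p"] 3 by simp
    moreover have "ln (p / q) = - ln (q / p)" using 3 by (simp add: ln_div)
    ultimately have "p * (1 - q / p) \<le> p * ln (p / q)" using 3 by (intro mult_left_mono) auto
    moreover have "p * (1 - q / p) = p - q" using 3 by (simp add: field_simps)
    ultimately have "- (p * ln (p / q)) \<le> q" using 3 by linarith
    then show ?thesis using 3 by (simp add: kl_integrand_def ennreal_leI)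
  qed (auto simp: kl_integrand_def e2ennreal_neg)
qed

lemma fin_nn:
  fixes g :: "'a \<Rightarrow> real"
  assumes "integrable M g"
  shows "(\<integral>\<^sup>+x. ennreal (g x) \<partial>M) < top"
  using integrableD(2)[OF assms] by (simp add: less_top)



lemma skw_bounds:
  assumes "a \<ge> 0" "b \<ge> 0"
  shows "0 \<le> skw a b" "skw a b \<le> 1"
  using assms by (auto simp: skw_def divide_le_eq_1)

lemma fin_sym:
  fixes g :: "'a::euclidean_space \<Rightarrow> real"
  assumes S: "\<Theta> \<in> sets lebesgue" and sym: "symmetric_set th \<Theta>"
    and g: "integrable (lebesgue_on \<Theta>) g" and gnn: "\<forall>t\<in>\<Theta>. g t \<ge> 0"
  shows "(\<integral>\<^sup>+x. ennreal ((g x + g (reflect th x)) / 2) \<partial>lebesgue_on \<Theta>) < top"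
proof -
  have gm[measurable]: "g \<in> borel_measurable (lebesgue_on \<Theta>)" using g by auto
  have r[measurable]: "reflect th \<in> lebesgue_on \<Theta> \<rightarrow>\<^sub>M lebesgue_on \<Theta>" by (rule reflect_meas_on[OF S sym])
  have "(\<integral>\<^sup>+x. ennreal ((g x + g (reflect th x)) / 2) \<partial>lebesgue_on \<Theta>)
      \<le> (\<integral>\<^sup>+x. ennreal (g x) + ennreal (g (reflect th x)) \<partial>lebesgue_on \<Theta>)"
  proof (intro nn_integral_mono)
    fix x assume x: "x \<in> space (lebesgue_on \<Theta>)"
    then have "g x \<ge> 0" "g (reflect th x) \<ge> 0" using gnn sym by (auto simp: symmetric_set_def)
    then show "ennreal ((g x + g (reflect th x)) / 2) \<le> ennreal (g x) + ennreal (g (reflect th x))"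
      by (simp add: ennreal_plus[symmetric] del: ennreal_plus)
  qed
  also have "\<dots> = (\<integral>\<^sup>+x. ennreal (g x) \<partial>lebesgue_on \<Theta>) + (\<integral>\<^sup>+x. ennreal (g (reflect th x)) \<partial>lebesgue_on \<Theta>)"
    by (rule nn_integral_add) auto
  also have "\<dots> = (\<integral>\<^sup>+x. ennreal (g x) \<partial>lebesgue_on \<Theta>) + (\<integral>\<^sup>+x. ennreal (g x) \<partial>lebesgue_on \<Theta>)"
    using nn_integral_reflect[OF S sym, of "\<lambda>x. ennreal (g x)"] by simp
  also have "\<dots> < top" using fin_nn[OF g] by (simp add: ennreal_add_less_top)
  finally show ?thesis .
qed

lemma ennreal_add_eq2:
  fixes X Y Z :: real
  assumes "X \<ge> 0" "Y \<ge> 0" "X + Y = 2 * Z"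
  shows "ennreal X + ennreal Y = 2 * ennreal Z"
  using assms by (simp add: ennreal_plus[symmetric] ennreal_two_mult del: ennreal_plus)

lemma ennreal_add_le2:
  fixes X Y Z :: real
  assumes "X \<ge> 0" "Y \<ge> 0" "2 * Z \<le> X + Y"
  shows "2 * ennreal Z \<le> ennreal X + ennreal Y"
  using assms by (simp add: ennreal_plus[symmetric] ennreal_two_mult ennreal_leI del: ennreal_plus)



lemma neg_fin:
  assumes "\<forall>t\<in>space M. 0 \<le> P t \<and> 0 \<le> Q t \<and> Q t \<le> B t" "(\<integral>\<^sup>+x. ennreal (B x) \<partial>M) < top"
  shows "(\<integral>\<^sup>+x. e2ennreal (- kl_integrand (P x) (Q x)) \<partial>M) < top"
proof -
  have "(\<integral>\<^sup>+x. e2ennreal (- kl_integrand (P x) (Q x)) \<partial>M) \<le> (\<integral>\<^sup>+x. ennreal (B x) \<partial>M)"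
  proof (rule nn_integral_mono)
    fix x assume x: "x \<in> space M"
    then have "e2ennreal (- kl_integrand (P x) (Q x)) \<le> ennreal (Q x)" using assms(1) by (intro kl_neg_bound) auto
    also have "\<dots> \<le> ennreal (B x)" using assms(1) x by (intro ennreal_leI) auto
    finally show "e2ennreal (- kl_integrand (P x) (Q x)) \<le> ennreal (B x)" .
  qed
  then show ?thesis using assms(2) by (rule le_less_trans)
qed

lemma tri_abs: "2 * \<bar>(x + y) / 2 - z\<bar> \<le> \<bar>x - z\<bar> + \<bar>y - (z::real)\<bar>"
proof -
  have e: "2 * ((x + y) / 2 - z) = (x - z) + (y - z)" by (simp add: field_simps)
  have "2 * \<bar>(x + y) / 2 - z\<bar> = \<bar>2 * ((x + y) / 2 - z)\<bar>" by (simp only: abs_mult abs_numeral)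
  then have "2 * \<bar>(x + y) / 2 - z\<bar> = \<bar>(x - z) + (y - z)\<bar>" by (simp only: e)
  then show ?thesis using abs_triangle_ineq[of "x - z" "y - z"] by simp
qed

theorem theorem1:
  fixes \<Theta> :: "'a::euclidean_space set" and th :: 'a
    and prior L f :: "'a \<Rightarrow> real"
  assumes "\<Theta> \<in> sets lebesgue" and "th \<in> \<Theta>" and "symmetric_set th \<Theta>"
    and "prior \<in> borel_measurable (lebesgue_on \<Theta>)" and "\<forall>t\<in>\<Theta>. prior t \<ge> 0"
    and "L \<in> borel_measurable (lebesgue_on \<Theta>)" and "\<forall>t\<in>\<Theta>. L t \<ge> 0"
    and "integrable (lebesgue_on \<Theta>) (\<lambda>t. prior t * L t)"
    and "(\<integral>t. prior t * L t \<partial>lebesgue_on \<Theta>) > 0"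
    and "f \<in> borel_measurable (lebesgue_on \<Theta>)" and "\<forall>t\<in>\<Theta>. f t \<ge> 0"
    and "integrable (lebesgue_on \<Theta>) f" and "(\<integral>t. f t \<partial>lebesgue_on \<Theta>) = 1"
    and "sym_about \<Theta> th f"
  shows "TV_div (lebesgue_on \<Theta>) (posterior (lebesgue_on \<Theta>) prior L) (skew_density prior L f th)
           = TV_div (lebesgue_on \<Theta>) (sym_posterior (lebesgue_on \<Theta>) prior L th) f
       \<and> TV_div (lebesgue_on \<Theta>) (posterior (lebesgue_on \<Theta>) prior L) (skew_density prior L f th)
           \<le> TV_div (lebesgue_on \<Theta>) (posterior (lebesgue_on \<Theta>) prior L) f
       \<and> (\<forall>a::real.
            alpha_div (lebesgue_on \<Theta>) a (posterior (lebesgue_on \<Theta>) prior L) (skew_density prior L f th)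
              = alpha_div (lebesgue_on \<Theta>) a (sym_posterior (lebesgue_on \<Theta>) prior L th) f
          \<and> alpha_div (lebesgue_on \<Theta>) a (posterior (lebesgue_on \<Theta>) prior L) (skew_density prior L f th)
              \<le> alpha_div (lebesgue_on \<Theta>) a (posterior (lebesgue_on \<Theta>) prior L) f)"
proof -
  let ?M = "lebesgue_on \<Theta>"
  note S = assms(1) and sym = assms(3)
  define c where "c = (\<integral>t. prior t * L t \<partial>?M)"
  have c: "c > 0" using assms(9) by (simp add: c_def)
  define PL where "PL = (\<lambda>t. prior t * L t)"
  have r[measurable]: "reflect th \<in> ?M \<rightarrow>\<^sub>M ?M" by (rule reflect_meas_on[OF S sym])
  have [measurable]: "prior \<in> borel_measurable ?M" "L \<in> borel_measurable ?M" "f \<in> borel_measurable ?M"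
    using assms by auto
  have PLm[measurable]: "PL \<in> borel_measurable ?M" unfolding PL_def by measurable
  have rin: "\<And>t. t \<in> \<Theta> \<Longrightarrow> reflect th t \<in> \<Theta>" using sym by (simp add: symmetric_set_def)
  have PLnn: "\<And>t. t \<in> \<Theta> \<Longrightarrow> PL t \<ge> 0" using assms(5,7) by (simp add: PL_def)
  have fnn: "\<And>t. t \<in> \<Theta> \<Longrightarrow> f t \<ge> 0" using assms(11) by simp
  have fsym: "\<And>t. t \<in> \<Theta> \<Longrightarrow> f (reflect th t) = f t" using assms(14) by (simp add: sym_about_def)
  have post: "posterior ?M prior L = (\<lambda>t. PL t / c)" by (simp add: fun_eq_iff posterior_def PL_def c_def)
  have symp: "sym_posterior ?M prior L th = (\<lambda>t. (PL t / c + PL (reflect th t) / c) / 2)"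
    by (simp add: fun_eq_iff sym_posterior_def post)
  have skd: "skew_density prior L f th = (\<lambda>t. 2 * f t * skw (PL t) (PL (reflect th t)))"
    by (simp add: fun_eq_iff skew_density_def skew_factor_def skw_def Let_def PL_def)
  have PLint: "integrable ?M (\<lambda>t. PL t / c)" using assms(8) unfolding PL_def by (rule integrable_divide)
  have fint: "integrable ?M (\<lambda>t. 2 * f t)" using assms(12) by (rule integrable_mult_right)
  have PLfin: "(\<integral>\<^sup>+x. ennreal (PL x / c) \<partial>?M) < top" by (rule fin_nn[OF PLint])
  have ffin: "(\<integral>\<^sup>+x. ennreal (f x) \<partial>?M) < top" by (rule fin_nn[OF assms(12)])
  have f2fin: "(\<integral>\<^sup>+x. ennreal (2 * f x) \<partial>?M) < top" by (rule fin_nn[OF fint])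
  have sfin: "(\<integral>\<^sup>+x. ennreal ((PL x / c + PL (reflect th x) / c) / 2) \<partial>?M) < top"
    by (rule fin_sym[OF S sym PLint]) (use PLnn c in auto)
  have qnn: "\<And>t. t \<in> \<Theta> \<Longrightarrow> 0 \<le> 2 * f t * skw (PL t) (PL (reflect th t))"
    using fnn PLnn rin skw_bounds by simp
  have qle: "\<And>t. t \<in> \<Theta> \<Longrightarrow> 2 * f t * skw (PL t) (PL (reflect th t)) \<le> 2 * f t"
    using fnn PLnn rin skw_bounds by (simp add: mult_left_le)
  have pnn: "\<And>t. t \<in> \<Theta> \<Longrightarrow> 0 \<le> PL t / c" using PLnn c by simp
  have spnn: "\<And>t. t \<in> \<Theta> \<Longrightarrow> 0 \<le> (PL t / c + PL (reflect th t) / c) / 2" using PLnn c rin by simp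

  have tv_eq: "(\<integral>\<^sup>+x. ennreal \<bar>PL x / c - 2 * f x * skw (PL x) (PL (reflect th x))\<bar> \<partial>?M)
      = (\<integral>\<^sup>+x. ennreal \<bar>(PL x / c + PL (reflect th x) / c) / 2 - f x\<bar> \<partial>?M)"
  proof (rule pair_eq2[OF S sym])
    show "\<forall>t\<in>\<Theta>. ennreal \<bar>PL t / c - 2 * f t * skw (PL t) (PL (reflect th t))\<bar>
       + ennreal \<bar>PL (reflect th t) / c - 2 * f (reflect th t) * skw (PL (reflect th t)) (PL (reflect th (reflect th t)))\<bar>
       = 2 * ennreal \<bar>(PL t / c + PL (reflect th t) / c) / 2 - f t\<bar>"
    proof
      fix t assume t: "t \<in> \<Theta>"
      show "ennreal \<bar>PL t / c - 2 * f t * skw (PL t) (PL (reflect th t))\<bar>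
       + ennreal \<bar>PL (reflect th t) / c - 2 * f (reflect th t) * skw (PL (reflect th t)) (PL (reflect th (reflect th t)))\<bar>
       = 2 * ennreal \<bar>(PL t / c + PL (reflect th t) / c) / 2 - f t\<bar>"
        using tv_pair[OF PLnn[OF t] PLnn[OF rin[OF t]] c fnn[OF t]] fsym[OF t]
        by (intro ennreal_add_eq2) auto
    qed
  qed measurable
  have tv_le: "(\<integral>\<^sup>+x. ennreal \<bar>(PL x / c + PL (reflect th x) / c) / 2 - f x\<bar> \<partial>?M)
      \<le> (\<integral>\<^sup>+x. ennreal \<bar>PL x / c - f x\<bar> \<partial>?M)"
  proof (rule pair_le2[OF S sym])
    show "\<forall>t\<in>\<Theta>. 2 * ennreal \<bar>(PL t / c + PL (reflect th t) / c) / 2 - f t\<bar>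
        \<le> ennreal \<bar>PL t / c - f t\<bar> + ennreal \<bar>PL (reflect th t) / c - f (reflect th t)\<bar>"
    proof
      fix t assume t: "t \<in> \<Theta>"
      show "2 * ennreal \<bar>(PL t / c + PL (reflect th t) / c) / 2 - f t\<bar>
        \<le> ennreal \<bar>PL t / c - f t\<bar> + ennreal \<bar>PL (reflect th t) / c - f (reflect th t)\<bar>"
        using fsym[OF t] tri_abs[of "PL t / c" "PL (reflect th t) / c" "f t"] by (intro ennreal_add_le2) auto
    qed
  qed measurable
  have TV: "TV_div ?M (posterior ?M prior L) (skew_density prior L f th) = TV_div ?M (sym_posterior ?M prior L th) f
      \<and> TV_div ?M (posterior ?M prior L) (skew_density prior L f th) \<le> TV_div ?M (posterior ?M prior L) f"
    unfolding TV_div_def post symp skd tv_eq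
    using tv_le by (auto intro!: ereal_mult_left_mono simp: less_eq_ennreal.rep_eq[symmetric])
  have AL: "alpha_div ?M a (posterior ?M prior L) (skew_density prior L f th) = alpha_div ?M a (sym_posterior ?M prior L th) f
      \<and> alpha_div ?M a (posterior ?M prior L) (skew_density prior L f th) \<le> alpha_div ?M a (posterior ?M prior L) f" for a :: real
  proof -
    consider "a = 1" | "a = 0" | "a \<noteq> 1" "a \<noteq> 0" by blast
    then show ?thesis
    proof cases
      case 1
      have Fm: "(\<lambda>x. kl_integrand (PL x / c) (2 * f x * skw (PL x) (PL (reflect th x)))) \<in> borel_measurable ?M"
        by measurable
      have Hm: "(\<lambda>x. kl_integrand ((PL x / c + PL (reflect th x) / c) / 2) (f x)) \<in> borel_measurable ?M"
        by measurable
      have Km: "(\<lambda>x. kl_integrand (PL x / c) (f x)) \<in> borel_measurable ?M"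
        by measurable
      have pt: "\<forall>t\<in>\<Theta>. kl_integrand (PL t / c) (2 * f t * skw (PL t) (PL (reflect th t)))
          + kl_integrand (PL (reflect th t) / c) (2 * f (reflect th t) * skw (PL (reflect th t)) (PL (reflect th (reflect th t))))
          = 2 * kl_integrand ((PL t / c + PL (reflect th t) / c) / 2) (f t)"
        using kl_pair[OF PLnn PLnn[OF rin] c fnn] fsym by simp
      have pt2: "\<forall>t\<in>\<Theta>. 2 * kl_integrand ((PL t / c + PL (reflect th t) / c) / 2) (f t)
          \<le> kl_integrand (PL t / c) (f t) + kl_integrand (PL (reflect th t) / c) (f (reflect th t))"
        using kl_convex[OF pnn pnn[OF rin] fnn] fsym by simp
      have NF: "(\<integral>\<^sup>+x. e2ennreal (- kl_integrand (PL x / c) (2 * f x * skw (PL x) (PL (reflect th x)))) \<partial>?M) < top"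
        by (rule neg_fin[OF _ f2fin]) (use pnn qnn qle in simp)
      have NH: "(\<integral>\<^sup>+x. e2ennreal (- kl_integrand ((PL x / c + PL (reflect th x) / c) / 2) (f x)) \<partial>?M) < top"
        by (rule neg_fin[OF _ ffin]) (use spnn fnn in simp)
      have NK: "(\<integral>\<^sup>+x. e2ennreal (- kl_integrand (PL x / c) (f x)) \<partial>?M) < top"
        by (rule neg_fin[OF _ ffin]) (use pnn fnn in simp)
      note E = KL_pair_eq[OF S sym Fm Hm kl_not_minf kl_not_minf pt NF NH]
      note I = KL_pair_le[OF S sym Km Hm kl_not_minf kl_not_minf pt2 NK NH]
      show ?thesis using 1 E I unfolding alpha_div_def KL_div_def post symp skd by simp
    next
      case 2
      have Fm: "(\<lambda>x. kl_integrand (2 * f x * skw (PL x) (PL (reflect th x))) (PL x / c)) \<in> borel_measurable ?M"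
        by measurable
      have Hm: "(\<lambda>x. kl_integrand (f x) ((PL x / c + PL (reflect th x) / c) / 2)) \<in> borel_measurable ?M"
        by measurable
      have Km: "(\<lambda>x. kl_integrand (f x) (PL x / c)) \<in> borel_measurable ?M"
        by measurable
      have pt: "\<forall>t\<in>\<Theta>. kl_integrand (2 * f t * skw (PL t) (PL (reflect th t))) (PL t / c)
          + kl_integrand (2 * f (reflect th t) * skw (PL (reflect th t)) (PL (reflect th (reflect th t)))) (PL (reflect th t) / c)
          = 2 * kl_integrand (f t) ((PL t / c + PL (reflect th t) / c) / 2)"
        using kl_rev_pair[OF PLnn PLnn[OF rin] c fnn] fsym by simp
      have pt2: "\<forall>t\<in>\<Theta>. 2 * kl_integrand (f t) ((PL t / c + PL (reflect th t) / c) / 2)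
          \<le> kl_integrand (f t) (PL t / c) + kl_integrand (f (reflect th t)) (PL (reflect th t) / c)"
        using kl_rev_convex[OF pnn pnn[OF rin] fnn] fsym by simp
      have NF: "(\<integral>\<^sup>+x. e2ennreal (- kl_integrand (2 * f x * skw (PL x) (PL (reflect th x))) (PL x / c)) \<partial>?M) < top"
        by (rule neg_fin[OF _ PLfin]) (use pnn qnn in simp)
      have NH: "(\<integral>\<^sup>+x. e2ennreal (- kl_integrand (f x) ((PL x / c + PL (reflect th x) / c) / 2)) \<partial>?M) < top"
        by (rule neg_fin[OF _ sfin]) (use spnn fnn in simp)
      have NK: "(\<integral>\<^sup>+x. e2ennreal (- kl_integrand (f x) (PL x / c)) \<partial>?M) < top"
        by (rule neg_fin[OF _ PLfin]) (use pnn fnn in simp)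
      note E = KL_pair_eq[OF S sym Fm Hm kl_not_minf kl_not_minf pt NF NH]
      note I = KL_pair_le[OF S sym Km Hm kl_not_minf kl_not_minf pt2 NK NH]
      show ?thesis using 2 E I unfolding alpha_div_def KL_div_def post symp skd by simp
    next
      case 3
      have AD: "\<And>p q. alpha_div ?M a p q = (1 - enn2ereal (\<integral>\<^sup>+x. alpha_integrand a (p x) (q x) \<partial>?M)) / ereal (a * (1 - a))"
        using 3 by (simp add: alpha_div_def)
      have ai_eq: "(\<integral>\<^sup>+x. alpha_integrand a (PL x / c) (2 * f x * skw (PL x) (PL (reflect th x))) \<partial>?M)
          = (\<integral>\<^sup>+x. alpha_integrand a ((PL x / c + PL (reflect th x) / c) / 2) (f x) \<partial>?M)"
      proof (rule pair_eq2[OF S sym])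
        show "\<forall>t\<in>\<Theta>. alpha_integrand a (PL t / c) (2 * f t * skw (PL t) (PL (reflect th t)))
          + alpha_integrand a (PL (reflect th t) / c) (2 * f (reflect th t) * skw (PL (reflect th t)) (PL (reflect th (reflect th t))))
          = 2 * alpha_integrand a ((PL t / c + PL (reflect th t) / c) / 2) (f t)"
          using alpha_pair[OF PLnn PLnn[OF rin] c fnn] fsym by simp
      qed measurable
      let ?Is = "\<integral>\<^sup>+x. alpha_integrand a ((PL x / c + PL (reflect th x) / c) / 2) (f x) \<partial>?M"
      let ?Ip = "\<integral>\<^sup>+x. alpha_integrand a (PL x / c) (f x) \<partial>?M"
      have ineq: "(1 - enn2ereal ?Is) / ereal (a * (1 - a)) \<le> (1 - enn2ereal ?Ip) / ereal (a * (1 - a))"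
      proof (cases "0 < a \<and> a < 1")
        case True
        have "?Ip \<le> ?Is"
        proof (rule pair_ge2[OF S sym])
          show "\<forall>t\<in>\<Theta>. alpha_integrand a (PL t / c) (f t) + alpha_integrand a (PL (reflect th t) / c) (f (reflect th t))
            \<le> 2 * alpha_integrand a ((PL t / c + PL (reflect th t) / c) / 2) (f t)"
            using True ai_concave[OF _ _ pnn pnn[OF rin] fnn] fsym by simp
        qed measurable
        then show ?thesis using True
          by (intro ediv_pos_mono one_minus_mono) (auto intro: mult_pos_pos)
      next
        case False
        then have a': "a < 0 \<or> 1 < a" using 3 by auto
        have "?Is \<le> ?Ip"
        proof (rule pair_le2[OF S sym])
          show "\<forall>t\<in>\<Theta>. 2 * alpha_integrand a ((PL t / c + PL (reflect th t) / c) / 2) (f t)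
            \<le> alpha_integrand a (PL t / c) (f t) + alpha_integrand a (PL (reflect th t) / c) (f (reflect th t))"
            using ai_convex[OF a' pnn pnn[OF rin] fnn] fsym by simp
        qed measurable
        moreover have "a * (1 - a) < 0" using a' by (auto simp: mult_neg_pos mult_pos_neg)
        ultimately show ?thesis by (intro ediv_neg_mono one_minus_mono)
      qed
      show ?thesis unfolding AD post symp skd using ai_eq ineq by simp
    qed
  qed
  show ?thesis using TV AL by blast
qed


end
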